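(* Let $f(x)$ be a complex-valued function of a real variable defined to the right of $0$, and let $g(x)=f(1/\log x)$, defined in a neighbourhood of $\infty$ (equivalently, let $g$ be any complex-valued function defined in a neighbourhood of $\infty$ and $f(x)=g(e^{1/x})$ for $x>0$ small). Let $a_n\in\mathbb C$ for $n\ge0$, let $N$ be a positive integer, and let $L(x)$ be any function with $L(x)=\log x+o\big((\log x)^{-(N-2)}\big)$ $(x\to\infty)$. Then the following asymptotic expansions (each with terms $n=0,\dots,N$, i.e. of order $N+1$) are equivalent: (1) $f(x)\sim\sum_{n=0}^N a_nx^n$ $(x\to0^+)$; (2) $f(1/x)=g(e^x)\sim\sum_{n=0}^N\frac{a_n}{x^n}$ $(x\to\infty)$; (3) $g(x)\sim\sum_{n=0}^N\frac{a_n}{L(x)^n}$ $(x\to\infty)$; (4) $g(x)\sim\sum_{n=0}^N\frac{a_n}{(\log x)^n}$ $(x\to\infty)$; (5) $g(x)\sim\sum_{n=0}^N\frac{a_n}{(H_x-\gamma)^n}$ $(x\to\infty)$; (6) $g(x)\sim\sum_{n=0}^N\frac{a_n}{\Psi(x)^n}$ $(x\to\infty)$.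
   Context: $\gamma$ is the Euler–Mascheroni constant, $\Psi=\Gamma'/\Gamma$ is the digamma function, and $H_x=\Psi(x+1)+\gamma=\int_0^1\frac{1-t^x}{1-t}dt$ for real $x>0$ (interpolating the harmonic numbers). An asymptotic expansion $h\sim\sum_{n=0}^N a_n\varphi_n$ of order $N+1$ with respect to an asymptotic sequence $\{\varphi_n\}$ (i.e. $\varphi_{n+1}=o(\varphi_n)$) means $h-\sum_{k=0}^n a_k\varphi_k=o(\varphi_n)$ for all $n\le N$ (equivalently for $n=N$). *)

theory Defs
  imports "HOL-Analysis.Analysis" "HOL-Library.Landau_Symbols"
begin

definition asymp_expansion ::
  "'a filter \<Rightarrow> ('a \<Rightarrow> complex) \<Rightarrow> (nat \<Rightarrow> complex) \<Rightarrow> (nat \<Rightarrow> 'a \<Rightarrow> complex) \<Rightarrow> nat \<Rightarrow> bool" where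
  "asymp_expansion F h a \<phi> N \<longleftrightarrow>
     (\<forall>n\<le>N. (\<lambda>x. h x - (\<Sum>k\<le>n. a k * \<phi> k x)) \<in> o[F](\<phi> n))"

definition harm_real :: "real \<Rightarrow> real" where
  "harm_real x = Digamma (x + 1) + euler_mascheroni"

end

theory Submission imports Defs "HOL-Real_Asymp.Real_Asymp" begin

lemma expansion_transfer1:
  fixes \<phi> \<psi> :: "nat \<Rightarrow> 'a \<Rightarrow> complex"
  assumes th: "\<And>n. n \<le> N \<Longrightarrow> \<phi> n \<in> \<Theta>[F](\<psi> n)"
  and d: "\<And>k n. k \<le> n \<Longrightarrow> n \<le> N \<Longrightarrow> (\<lambda>x. \<phi> k x - \<psi> k x) \<in> o[F](\<psi> n)"
  and E: "asymp_expansion F h a \<phi> N"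
  shows "asymp_expansion F h a \<psi> N"
  unfolding asymp_expansion_def
proof (intro allI impI)
  fix n assume n: "n \<le> N"
  have A: "(\<lambda>x. h x - (\<Sum>k\<le>n. a k * \<phi> k x)) \<in> o[F](\<psi> n)"
    using E n th[OF n] unfolding asymp_expansion_def
    using landau_o.small.cong_bigtheta by blast
  have B: "(\<lambda>x. \<Sum>k\<le>n. a k * (\<phi> k x - \<psi> k x)) \<in> o[F](\<psi> n)"
  proof (rule big_sum_in_smallo)
    fix k assume k: "k \<in> {..n}"
    show "(\<lambda>x. a k * (\<phi> k x - \<psi> k x)) \<in> o[F](\<psi> n)"
    proof (cases "a k = 0")
      case True thus ?thesis by simp
    next
      case False thus ?thesis using d[of k n] k n by simp
    qed
  qed
  have eq: "(\<lambda>x. h x - (\<Sum>k\<le>n. a k * \<psi> k x)) =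
     (\<lambda>x. (h x - (\<Sum>k\<le>n. a k * \<phi> k x)) + (\<Sum>k\<le>n. a k * (\<phi> k x - \<psi> k x)))"
    by (rule ext) (simp add: algebra_simps sum_subtractf sum.distrib)
  show "(\<lambda>x. h x - (\<Sum>k\<le>n. a k * \<psi> k x)) \<in> o[F](\<psi> n)"
    unfolding eq by (rule sum_in_smallo(1)[OF A B])
qed

lemma expansion_transfer:
  fixes \<phi> \<psi> :: "nat \<Rightarrow> 'a \<Rightarrow> complex"
  assumes th: "\<And>n. n \<le> N \<Longrightarrow> \<phi> n \<in> \<Theta>[F](\<psi> n)"
  and d: "\<And>k n. k \<le> n \<Longrightarrow> n \<le> N \<Longrightarrow> (\<lambda>x. \<phi> k x - \<psi> k x) \<in> o[F](\<psi> n)"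
  shows "asymp_expansion F h a \<phi> N \<longleftrightarrow> asymp_expansion F h a \<psi> N"
proof
  assume "asymp_expansion F h a \<phi> N"
  thus "asymp_expansion F h a \<psi> N" using expansion_transfer1[of N \<phi> F \<psi> h a] th d by blast
next
  assume E: "asymp_expansion F h a \<psi> N"
  show "asymp_expansion F h a \<phi> N"
  proof (rule expansion_transfer1[OF _ _ E])
    fix n assume "n \<le> N" thus "\<psi> n \<in> \<Theta>[F](\<phi> n)" using th bigtheta_sym by blast
  next
    fix k n assume kn: "k \<le> n" "n \<le> N"
    have "(\<lambda>x. - (\<phi> k x - \<psi> k x)) \<in> o[F](\<psi> n)" using d[OF kn] by (simp only: landau_o.small.uminus_in_iff)
    hence "(\<lambda>x. \<psi> k x - \<phi> k x) \<in> o[F](\<psi> n)" by (simp add: minus_diff_eq)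
    thus "(\<lambda>x. \<psi> k x - \<phi> k x) \<in> o[F](\<phi> n)"
      using landau_o.small.cong_bigtheta[OF th[OF kn(2)]] by simp
  qed
qed


lemma M_real_facts:
  fixes M :: "real \<Rightarrow> real" and N :: nat
  assumes N: "N > 0"
  and hM: "(\<lambda>x. M x - ln x) \<in> o[at_top](\<lambda>x. ln x powr (2 - real N))"
  shows "(\<lambda>x. 1 / M x ^ n) \<in> \<Theta>[at_top](\<lambda>x. 1 / ln x ^ n)"
    and "k \<le> n \<Longrightarrow> n \<le> N \<Longrightarrow> (\<lambda>x. 1 / M x ^ k - 1 / ln x ^ k) \<in> o[at_top](\<lambda>x. 1 / ln x ^ n)"
proof -
  have ev_ln: "eventually (\<lambda>x::real. ln x \<ge> 1) at_top" by real_asymp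
  have P1: "(\<lambda>x. ln x powr (2 - real N)) \<in> O[at_top](\<lambda>x. ln x)"
  proof (rule bigoI[where c=1])
    show "eventually (\<lambda>x. norm (ln x powr (2 - real N)) \<le> 1 * norm (ln x)) at_top"
      using ev_ln
    proof eventually_elim
      case (elim x)
      have "ln x powr (2 - real N) \<le> ln x powr 1"
        using elim N by (intro powr_mono) auto
      thus ?case using elim by simp
    qed
  qed
  have "(\<lambda>x. M x - ln x) \<in> o[at_top](\<lambda>x. ln x)"
    using landau_o.small_big_trans[OF hM P1] .
  hence Mln: "M \<sim>[at_top] ln" by (rule smallo_imp_asymp_equiv)
  have Mtop: "filterlim M at_top at_top"
    using asymp_equiv_at_top_transfer[OF asymp_equiv_symI[OF Mln] ln_at_top] .
  have ev_M: "eventually (\<lambda>x. M x \<ge> 1) at_top"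
    using Mtop by (simp add: filterlim_at_top)
  show "(\<lambda>x. 1 / M x ^ n) \<in> \<Theta>[at_top](\<lambda>x. 1 / ln x ^ n)"
    by (intro asymp_equiv_imp_bigtheta asymp_equiv_intros Mln)
  have invM: "(\<lambda>x. 1 / M x) \<in> O[at_top](\<lambda>_. 1)"
  proof (rule bigoI_tendsto[where c=0])
    show "((\<lambda>x. 1 / M x / 1) \<longlongrightarrow> 0) at_top"
      using tendsto_inverse_0_at_top[OF Mtop] by (simp add: inverse_eq_divide)
  qed simp
  have invln: "(\<lambda>x::real. 1 / ln x ^ k) \<in> O[at_top](\<lambda>_. 1)" for k
  proof (rule bigoI[where c=1])
    show "eventually (\<lambda>x::real. norm (1 / ln x ^ k) \<le> 1 * norm (1::real)) at_top"
      using ev_ln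
    proof eventually_elim
      case (elim x)
      have "1 \<le> ln x ^ k" using elim by (simp add: one_le_power)
      thus ?case using elim by simp
    qed
  qed
  have D1: "(\<lambda>x. 1 / M x - 1 / ln x) \<in> o[at_top](\<lambda>x. 1 / ln x ^ N)"
  proof -
    have a: "(\<lambda>x. ln x - M x) \<in> o[at_top](\<lambda>x. ln x powr (2 - real N))"
      using hM by (subst landau_o.small.uminus_in_iff[symmetric]) simp
    have b: "(\<lambda>x. 1 / (M x * ln x)) \<in> O[at_top](\<lambda>x. 1 / (ln x * ln x))"
      by (intro asymp_equiv_imp_bigo asymp_equiv_intros Mln)
    have c: "(\<lambda>x. (ln x - M x) * (1 / (M x * ln x))) \<in>
       o[at_top](\<lambda>x. ln x powr (2 - real N) * (1 / (ln x * ln x)))"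
      by (rule landau_o.small_big_mult[OF a b])
    have e1: "eventually (\<lambda>x. (ln x - M x) * (1 / (M x * ln x)) = 1 / M x - 1 / ln x) at_top"
      using ev_ln ev_M by eventually_elim (simp add: field_simps)
    have e2: "eventually (\<lambda>x. ln x powr (2 - real N) * (1 / (ln x * ln x)) = 1 / ln x ^ N) at_top"
      using ev_ln
    proof eventually_elim
      case (elim x)
      have "ln x powr (2 - real N) = ln x powr 2 / ln x powr real N"
        by (rule powr_diff)
      also have "\<dots> = (ln x * ln x) / ln x ^ N" using elim
        by (simp add: powr_realpow power2_eq_square)
      finally show ?case using elim by simp
    qed
    show ?thesis using c landau_o.small.cong_ex[OF e1 e2] by simp
  qed
  have Dk: "(\<lambda>x. 1 / M x ^ k - 1 / ln x ^ k) \<in> o[at_top](\<lambda>x. 1 / ln x ^ N)" for k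
  proof (induction k)
    case 0 thus ?case by simp
  next
    case (Suc k)
    have s1: "(\<lambda>x. 1 / M x * (1 / M x ^ k - 1 / ln x ^ k)) \<in> o[at_top](\<lambda>x. 1 * (1 / ln x ^ N))"
      by (rule landau_o.big_small_mult[OF invM Suc.IH])
    have s2: "(\<lambda>x. 1 / ln x ^ k * (1 / M x - 1 / ln x)) \<in> o[at_top](\<lambda>x. 1 * (1 / ln x ^ N))"
      by (rule landau_o.big_small_mult[OF invln D1])
    have eq: "(\<lambda>x. 1 / M x ^ Suc k - 1 / ln x ^ Suc k) =
      (\<lambda>x. 1 / M x * (1 / M x ^ k - 1 / ln x ^ k) + 1 / ln x ^ k * (1 / M x - 1 / ln x))"
      by (rule ext) (simp add: algebra_simps)
    show ?case unfolding eq using sum_in_smallo(1)[OF s1 s2] by simp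
  qed
  assume kn: "k \<le> n" "n \<le> N"
  have "(\<lambda>x::real. 1 / ln x ^ N) \<in> O[at_top](\<lambda>x. 1 / ln x ^ n)"
  proof (rule bigoI[where c=1])
    show "eventually (\<lambda>x::real. norm (1 / ln x ^ N) \<le> 1 * norm (1 / ln x ^ n)) at_top"
      using ev_ln
    proof eventually_elim
      case (elim x)
      have "ln x ^ n \<le> ln x ^ N" using elim kn by (intro power_increasing) auto
      moreover have "0 < ln x ^ n" using elim by simp
      ultimately show ?case using elim by (simp add: frac_le)
    qed
  qed
  thus "(\<lambda>x. 1 / M x ^ k - 1 / ln x ^ k) \<in> o[at_top](\<lambda>x. 1 / ln x ^ n)"
    using landau_o.small_big_trans[OF Dk] by blast
qed


lemma swap_M:
  fixes M :: "real \<Rightarrow> real" and N :: nat and g :: "real \<Rightarrow> complex"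
  assumes N: "N > 0"
  and hM: "(\<lambda>x. M x - ln x) \<in> o[at_top](\<lambda>x. ln x powr (2 - real N))"
  shows "asymp_expansion at_top g a (\<lambda>n x. complex_of_real (1 / M x ^ n)) N \<longleftrightarrow>
         asymp_expansion at_top g a (\<lambda>n x. complex_of_real (1 / ln x ^ n)) N"
proof (rule expansion_transfer)
  fix n
  show "(\<lambda>x. complex_of_real (1 / M x ^ n)) \<in> \<Theta>(\<lambda>x. complex_of_real (1 / ln x ^ n))"
    using M_real_facts(1)[OF N hM, of n] by (simp only: landau_theta.of_real_iff)
next
  fix k n :: nat assume kn: "k \<le> n" "n \<le> N"
  have "(\<lambda>x. complex_of_real (1 / M x ^ k - 1 / ln x ^ k)) \<in> o(\<lambda>x. complex_of_real (1 / ln x ^ n))"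
    using M_real_facts(2)[OF N hM kn] by (simp only: landau_o.small.of_real_iff)
  thus "(\<lambda>x. complex_of_real (1 / M x ^ k) - complex_of_real (1 / ln x ^ k)) \<in> o(\<lambda>x. complex_of_real (1 / ln x ^ n))"
    by (simp only: of_real_diff)
qed

lemma Digamma_ln_bound:
  fixes x :: real
  assumes x: "x \<ge> 3"
  shows "\<bar>Digamma x - ln x\<bar> \<le> ln (x + 1) - ln (x - 1) + 1 / (x - 2)"
proof -
  define n where "n = nat \<lfloor>x\<rfloor> - 2"
  have n1: "real n + 2 \<le> x" and n2: "x < real n + 3"
    using x unfolding n_def by linarith+
  have lo: "Digamma (real n + 2) \<le> Digamma x"
    using n1 by (intro Digamma_real_mono) auto
  have "Digamma (real n + 2) = Digamma (of_nat (Suc (Suc n)) :: real)" by (simp add: add_ac)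
  also have "\<dots> = harm (Suc n) - euler_mascheroni" by (rule Digamma_of_nat)
  finally have lo2: "Digamma (real n + 2) = harm (Suc n) - euler_mascheroni" .
  have "euler_mascheroni \<le> harm (Suc n) - ln (real (n + 2)) + 1 / real (2 * (n + 1))"
    by (rule euler_mascheroni_upper)
  hence L: "Digamma x \<ge> ln (real n + 2) - 1 / (2 * (real n + 1))"
    using lo lo2 by (simp add: add_ac)
  have hi: "Digamma x \<le> Digamma (real n + 3)"
    using n2 x by (intro Digamma_real_mono) auto
  have "Digamma (real n + 3) = Digamma (of_nat (Suc (Suc (Suc n))) :: real)" by (simp add: add_ac)
  also have "\<dots> = harm (Suc (Suc n)) - euler_mascheroni" by (rule Digamma_of_nat)
  finally have hi2: "Digamma (real n + 3) = harm (Suc (Suc n)) - euler_mascheroni" .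
  have "euler_mascheroni \<ge> harm (Suc (Suc n)) - ln (real (Suc n + 2)) + 1 / real (2 * (Suc n + 2))"
    by (rule euler_mascheroni_lower)
  moreover have "1 / real (2 * (Suc n + 2)) \<ge> 0" by simp
  ultimately have "harm (Suc (Suc n)) - ln (real (Suc n + 2)) \<le> euler_mascheroni" by linarith
  moreover have "ln (real (Suc n + 2)) = ln (real n + 3)" by (simp add: add_ac)
  ultimately have U: "Digamma x \<le> ln (real n + 3)"
    using hi hi2 by linarith
  have l1: "ln (real n + 2) \<le> ln x" using n1 by simp
  have l2: "ln x \<le> ln (real n + 3)" using n2 x by simp
  have l3: "ln (real n + 3) \<le> ln (x + 1)" using n1 by simp
  have l4: "ln (x - 1) \<le> ln (real n + 2)" using n2 x by simp
  have l5: "1 / (2 * (real n + 1)) \<le> 1 / (x - 2)"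
    using n2 x by (intro divide_left_mono) auto
  have l6: "1 / (x - 2) \<ge> 0" using x by simp
  show ?thesis unfolding abs_le_iff using L U l1 l2 l3 l4 l5 l6 by linarith
qed

lemma Digamma_ln_bigo: "(\<lambda>x. Digamma x - ln x) \<in> O[at_top](\<lambda>x::real. 1 / x)"
proof -
  have "(\<lambda>x::real. Digamma x - ln x) \<in> O[at_top](\<lambda>x. ln (x + 1) - ln (x - 1) + 1 / (x - 2))"
  proof (rule bigoI[where c=1])
    have "eventually (\<lambda>x::real. x \<ge> 3) at_top" by simp
    thus "eventually (\<lambda>x::real. norm (Digamma x - ln x) \<le> 1 * norm (ln (x + 1) - ln (x - 1) + 1 / (x - 2))) at_top"
    proof eventually_elim
      case (elim x)
      thus ?case using Digamma_ln_bound[OF elim] by simp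
    qed
  qed
  also have "(\<lambda>x::real. ln (x + 1) - ln (x - 1) + 1 / (x - 2)) \<in> O[at_top](\<lambda>x. 1 / x)"
    by real_asymp
  finally show ?thesis .
qed

lemma Digamma1_ln_bigo: "(\<lambda>x. Digamma (x + 1) - ln x) \<in> O[at_top](\<lambda>x::real. 1 / x)"
proof -
  have e: "eventually (\<lambda>x::real. (Digamma x - ln x) + 1 / x = Digamma (x + 1) - ln x) at_top"
    using eventually_gt_at_top[of "0::real"]
    by eventually_elim (simp add: Digamma_plus1)
  have "(\<lambda>x::real. (Digamma x - ln x) + 1 / x) \<in> O[at_top](\<lambda>x::real. 1 / x)"
    by (rule sum_in_bigo(1)[OF Digamma_ln_bigo]) simp
  thus ?thesis using landau_o.big.in_cong[OF e] by blast
qed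

lemma inv_smallo_lnpowr: "(\<lambda>x::real. 1 / x) \<in> o[at_top](\<lambda>x. ln x powr r)"
  by real_asymp


lemma E12:
  "asymp_expansion (at_right 0) f a (\<lambda>n x. complex_of_real (x ^ n)) N \<longleftrightarrow>
   asymp_expansion at_top (\<lambda>x. f (1 / x)) a (\<lambda>n x. complex_of_real (1 / x ^ n)) N"
  unfolding asymp_expansion_def at_right_to_top landau_o.small.in_filtermap_iff
  by (simp add: inverse_eq_divide power_one_over)

lemma E24:
  fixes f g :: "real \<Rightarrow> complex"
  assumes fg: "\<forall>x>1. g x = f (1 / ln x)"
  shows "asymp_expansion at_top (\<lambda>x. f (1 / x)) a (\<lambda>n x. complex_of_real (1 / x ^ n)) N \<longleftrightarrow>
   asymp_expansion at_top g a (\<lambda>n x. complex_of_real (1 / ln x ^ n)) N"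
  unfolding asymp_expansion_def
proof (intro all_cong imp_cong refl)
  fix n :: nat
  have "(\<lambda>x. g x - (\<Sum>k\<le>n. a k * complex_of_real (1 / ln x ^ k))) \<in> o[at_top](\<lambda>x. complex_of_real (1 / ln x ^ n))
    \<longleftrightarrow> (\<lambda>x. g x - (\<Sum>k\<le>n. a k * complex_of_real (1 / ln x ^ k))) \<in> o[filtermap exp at_top](\<lambda>x. complex_of_real (1 / ln x ^ n))"
    by (simp add: filtermap_exp_at_top)
  also have "\<dots> \<longleftrightarrow> (\<lambda>y. g (exp y) - (\<Sum>k\<le>n. a k * complex_of_real (1 / y ^ k))) \<in> o[at_top](\<lambda>y. complex_of_real (1 / y ^ n))"
    unfolding landau_o.small.in_filtermap_iff by simp
  also have "\<dots> \<longleftrightarrow> (\<lambda>y. f (1 / y) - (\<Sum>k\<le>n. a k * complex_of_real (1 / y ^ k))) \<in> o[at_top](\<lambda>y. complex_of_real (1 / y ^ n))"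
  proof (rule landau_o.small.in_cong)
    show "eventually (\<lambda>y. g (exp y) - (\<Sum>k\<le>n. a k * complex_of_real (1 / y ^ k)) =
       f (1 / y) - (\<Sum>k\<le>n. a k * complex_of_real (1 / y ^ k))) at_top"
      using eventually_gt_at_top[of "0::real"]
    proof eventually_elim
      case (elim y)
      have "exp y > 1" using elim by simp
      thus ?case using fg by simp
    qed
  qed
  finally show "(\<lambda>x. f (1 / x) - (\<Sum>k\<le>n. a k * complex_of_real (1 / x ^ k))) \<in> o[at_top](\<lambda>x. complex_of_real (1 / x ^ n))
    \<longleftrightarrow> (\<lambda>x. g x - (\<Sum>k\<le>n. a k * complex_of_real (1 / ln x ^ k))) \<in> o[at_top](\<lambda>x. complex_of_real (1 / ln x ^ n))"
    by simp
qed

theorem proposition7p5: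
  fixes f g :: "real \<Rightarrow> complex" and L :: "real \<Rightarrow> real"
    and a :: "nat \<Rightarrow> complex" and N :: nat
  assumes N_pos: "N > 0"
    and fg: "\<forall>x>1. g x = f (1 / ln x)"
    and L: "(\<lambda>x. L x - ln x) \<in> o[at_top](\<lambda>x. ln x powr (2 - real N))"
  defines "E1 \<equiv> asymp_expansion (at_right 0) f a (\<lambda>n x. complex_of_real (x ^ n)) N"
    and "E2 \<equiv> asymp_expansion at_top (\<lambda>x. f (1 / x)) a (\<lambda>n x. complex_of_real (1 / x ^ n)) N"
    and "E3 \<equiv> asymp_expansion at_top g a (\<lambda>n x. complex_of_real (1 / L x ^ n)) N"
    and "E4 \<equiv> asymp_expansion at_top g a (\<lambda>n x. complex_of_real (1 / ln x ^ n)) N"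
    and "E5 \<equiv> asymp_expansion at_top g a
               (\<lambda>n x. complex_of_real (1 / (harm_real x - euler_mascheroni) ^ n)) N"
    and "E6 \<equiv> asymp_expansion at_top g a (\<lambda>n x. complex_of_real (1 / Digamma x ^ n)) N"
  shows "(E1 \<longleftrightarrow> E2) \<and> (E2 \<longleftrightarrow> E3) \<and> (E3 \<longleftrightarrow> E4) \<and> (E4 \<longleftrightarrow> E5) \<and> (E5 \<longleftrightarrow> E6)"
proof -
  have hD: "(\<lambda>x. Digamma x - ln x) \<in> o[at_top](\<lambda>x. ln x powr (2 - real N))"
    using landau_o.big_small_trans[OF Digamma_ln_bigo inv_smallo_lnpowr] .
  have hD1: "(\<lambda>x. Digamma (x + 1) - ln x) \<in> o[at_top](\<lambda>x. ln x powr (2 - real N))"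
    using landau_o.big_small_trans[OF Digamma1_ln_bigo inv_smallo_lnpowr] .
  have e12: "E1 \<longleftrightarrow> E2" unfolding E1_def E2_def by (rule E12)
  have e24: "E2 \<longleftrightarrow> E4" unfolding E2_def E4_def by (rule E24[OF fg])
  have e34: "E3 \<longleftrightarrow> E4" unfolding E3_def E4_def by (rule swap_M[OF N_pos L])
  have e64: "E6 \<longleftrightarrow> E4" unfolding E6_def E4_def by (rule swap_M[OF N_pos hD])
  have hr: "(\<lambda>x. harm_real x - euler_mascheroni) = (\<lambda>x. Digamma (x + 1))"
    by (simp add: harm_real_def)
  have e54: "E5 \<longleftrightarrow> E4" unfolding E5_def E4_def
    using swap_M[OF N_pos hD1, of g a] hr by (simp add: harm_real_def)
  show ?thesis using e12 e24 e34 e64 e54 by blast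
qed

end
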